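(* The Lagrange spectrum of $\mathbb{Q}((1/T))$ is $\mathbb{L}=\{1,2,3,\dots\}\cup\{\infty\}$.
   Context: $\mathbb{Q}((1/T))=\{\sum_{i=-\infty}^{m}a_iT^i: m\in\mathbb{Z},\ a_i\in\mathbb{Q}\}$ is the field of formal Laurent series in $1/T$ with rational coefficients. For nonzero $\alpha=\sum_{i\le m}a_iT^i$ with $a_m\neq0$, set $\deg\alpha=m$, and $\deg 0=-\infty$; on $\mathbb{Q}(T)$ this agrees with $\deg(P/Q)=\deg P-\deg Q$. For $\alpha\in\mathbb{Q}((1/T))$ not in $\mathbb{Q}(T)$, the Lagrange constant $l(\alpha)\in\mathbb{Z}\cup\{\infty\}$ is the supremum of the integers $k$ such that $\deg(\alpha-p/q)\le-2\deg q-k$ holds for infinitely many pairs $p,q\in\mathbb{Q}[T]$, $q\ne0$. The Lagrange spectrum is $\mathbb{L}=\{l(\alpha):\alpha\in\mathbb{Q}((1/T))\setminus\mathbb{Q}(T)\}$. *)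

theory Defs
  imports "HOL-Computational_Algebra.Polynomial" "HOL-Computational_Algebra.Formal_Laurent_Series"
    "HOL-Library.Extended_Real"
begin

text \<open>Q((1/T)) is modelled as rat fls (Laurent series in X with finite principal part),
  with X = 1/T, i.e. T = fls_X_inv.  Then sum_{i<=m} a_i T^i = sum_{i<=m} a_i X^(-i).\<close>

type_synonym laurentT = "rat fls"

definition polyT :: "rat poly \<Rightarrow> laurentT" where
  "polyT p = poly (map_poly fls_const p) fls_X_inv"

text \<open>deg alpha = largest exponent of T with nonzero coefficient = - subdegree in X.
  The predicate deg alpha <= n, with deg 0 = -infinity.\<close>
definition degT_le :: "laurentT \<Rightarrow> int \<Rightarrow> bool" where
  "degT_le \<alpha> n \<longleftrightarrow> \<alpha> = 0 \<or> - fls_subdegree \<alpha> \<le> n"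

definition ratfunT :: "laurentT set" where
  "ratfunT = {polyT p / polyT q | p q. q \<noteq> 0}"

definition good_approx :: "laurentT \<Rightarrow> int \<Rightarrow> laurentT set" where
  "good_approx \<alpha> k = {r. \<exists>p q. q \<noteq> 0 \<and> r = polyT p / polyT q \<and>
      degT_le (\<alpha> - r) (- 2 * int (degree q) - k)}"

definition lagrange_const :: "laurentT \<Rightarrow> ereal" where
  "lagrange_const \<alpha> = Sup {ereal (of_int k) | k. infinite (good_approx \<alpha> k)}"

definition lagrange_spectrum :: "ereal set" where
  "lagrange_spectrum = {lagrange_const \<alpha> | \<alpha>. \<alpha> \<notin> ratfunT}"

end

theory Submission
  imports Defs
begin


lemma polyT_pCons: "polyT (pCons a p) = fls_const a + fls_X_inv * polyT p"
  unfolding polyT_def by (simp add: map_poly_pCons)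

lemma polyT_nth: "fls_nth (polyT p) j = (if j \<le> 0 then coeff p (nat (-j)) else 0)"
proof (induction p arbitrary: j)
  case 0
  then show ?case by (simp add: polyT_def)
next
  case (pCons a p)
  have "fls_nth (polyT (pCons a p)) j = (if j = 0 then a else 0) + fls_nth (polyT p) (j+1)"
    by (simp add: polyT_pCons fls_X_inv_times_conv_shift)
  also have "\<dots> = (if j \<le> 0 then coeff (pCons a p) (nat (-j)) else 0)"
    using pCons.IH[of "j+1"]
    by (cases "j = 0") (auto simp: coeff_pCons split: nat.split intro!: arg_cong[where f="coeff p"])
  finally show ?case .
qed

lemma polyT_eqI: "(\<And>j. fls_nth f j = (if j \<le> 0 then coeff p (nat (-j)) else 0)) \<Longrightarrow> polyT p = f"
  by (intro fls_eqI) (simp add: polyT_nth)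

lemma polyT_add: "polyT (p + q) = polyT p + polyT q"
  by (intro fls_eqI) (simp add: polyT_nth)
lemma polyT_diff: "polyT (p - q) = polyT p - polyT q"
  by (intro fls_eqI) (simp add: polyT_nth)
lemma polyT_uminus: "polyT (- p) = - polyT p"
  by (intro fls_eqI) (simp add: polyT_nth)
lemma polyT_0 [simp]: "polyT 0 = 0"
  by (simp add: polyT_def)
lemma polyT_1 [simp]: "polyT 1 = 1"
  by (simp add: polyT_def)
lemma polyT_smult: "polyT (smult a p) = fls_const a * polyT p"
  by (intro fls_eqI) (simp add: polyT_nth)
lemma polyT_monom: "polyT (monom c n) = fls_const c * fls_X_inv ^ n"
  by (intro fls_eqI) (auto simp: polyT_nth fls_X_inv_power_times_conv_shift coeff_monom)
lemma polyT_mult: "polyT (p * q) = polyT p * polyT q"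
proof (induction p)
  case 0 then show ?case by simp
next
  case (pCons a p)
  have "pCons a p * q = smult a q + pCons 0 (p * q)" by (rule mult_pCons_left)
  hence "polyT (pCons a p * q) = fls_const a * polyT q + fls_X_inv * polyT (p * q)"
    by (simp add: polyT_add polyT_smult polyT_pCons)
  also have "\<dots> = polyT (pCons a p) * polyT q"
    by (simp add: pCons.IH polyT_pCons algebra_simps)
  finally show ?case .
qed
lemma polyT_power: "polyT (p ^ k) = polyT p ^ k"
  by (induction k) (simp_all add: polyT_mult)

lemma polyT_eq_0_iff [simp]: "polyT p = 0 \<longleftrightarrow> p = 0"
proof
  assume "polyT p = 0"
  hence "coeff p i = 0" for i using polyT_nth[of p "- int i"] by simp
  thus "p = 0" by (intro poly_eqI) simp
qed simp

lemma polyT_subdegree: "p \<noteq> 0 \<Longrightarrow> fls_subdegree (polyT p) = - int (degree p)"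
  by (intro fls_subdegree_eqI) (auto simp: polyT_nth coeff_eq_0)

lemma polyT_surj:
  assumes "\<And>j. j > 0 \<Longrightarrow> fls_nth h j = 0"
  shows "\<exists>p. polyT p = h"
proof -
  define p where "p = (\<Sum>i\<le>nat (- fls_subdegree h). monom (fls_nth h (- int i)) i)"
  have "polyT p = h"
  proof (rule polyT_eqI)
    fix j :: int
    show "fls_nth h j = (if j \<le> 0 then coeff p (nat (-j)) else 0)"
    proof (cases "j \<le> 0")
      case True
      have "coeff p (nat (-j)) = (if nat (-j) \<le> nat (- fls_subdegree h) then fls_nth h j else 0)"
        using True by (simp add: p_def coeff_sum coeff_monom)
      also have "\<dots> = fls_nth h j"
        using True by auto
      finally show ?thesis using True by simp
    qed (use assms in auto)
  qed
  thus ?thesis by blast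
qed



lemma subdeg_div:
  fixes a b :: "rat fls"
  assumes "a \<noteq> 0" "b \<noteq> 0"
  shows "fls_subdegree (a / b) = fls_subdegree a - fls_subdegree b"
proof -
  have "a = (a/b)*b" using assms by simp
  hence "fls_subdegree a = fls_subdegree (a/b) + fls_subdegree b"
    using assms by (metis fls_subdegree_mult divide_eq_0_iff)
  thus ?thesis by simp
qed

lemma liouville:
  assumes "q0 \<noteq> 0" "q \<noteq> 0" "\<alpha> = polyT p0 / polyT q0" "\<alpha> \<noteq> polyT p / polyT q"
  shows "fls_subdegree (\<alpha> - polyT p / polyT q) \<le> int (degree q0) + int (degree q)"
proof -
  have eq: "\<alpha> - polyT p / polyT q = polyT (p0*q - p*q0) / polyT (q0*q)"
    using assms by (simp add: polyT_mult polyT_diff field_simps)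
  have nz: "p0*q - p*q0 \<noteq> 0"
  proof
    assume "p0*q - p*q0 = 0"
    hence "\<alpha> - polyT p / polyT q = 0" using eq by simp
    thus False using assms(4) by simp
  qed
  have "fls_subdegree (\<alpha> - polyT p / polyT q) = - int (degree (p0*q - p*q0)) + int (degree (q0*q))"
    unfolding eq using nz assms by (subst subdeg_div) (auto simp: polyT_subdegree)
  also have "\<dots> \<le> int (degree q0) + int (degree q)"
    using assms by (simp add: degree_mult_eq)
  finally show ?thesis .
qed

lemma infinite_approx:
  fixes S :: "rat fls set"
  assumes "\<And>M::int. \<exists>r\<in>S. \<alpha> \<noteq> r \<and> M \<le> fls_subdegree (\<alpha> - r)"
  shows "infinite S"
proof
  assume fin: "finite S"
  define M where "M = Max ((\<lambda>r. fls_subdegree (\<alpha> - r)) ` S) + 1"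
  obtain r where r: "r \<in> S" "M \<le> fls_subdegree (\<alpha> - r)" using assms by blast
  have "fls_subdegree (\<alpha> - r) \<le> Max ((\<lambda>r. fls_subdegree (\<alpha> - r)) ` S)"
    using fin r(1) by (intro Max_ge) auto
  thus False using r(2) unfolding M_def by simp
qed

lemma good_approx_mono:
  assumes "k' \<le> k" shows "good_approx \<alpha> k \<subseteq> good_approx \<alpha> k'"
  using assms unfolding good_approx_def degT_le_def by fastforce

lemma lc_fin:
  assumes "infinite (good_approx \<alpha> n)" "finite (good_approx \<alpha> (n+1))"
  shows "lagrange_const \<alpha> = ereal (of_int n)"
proof -
  have le: "k \<le> n" if "infinite (good_approx \<alpha> k)" for k
  proof (rule ccontr)
    assume "\<not> k \<le> n"
    hence "good_approx \<alpha> k \<subseteq> good_approx \<alpha> (n+1)" by (intro good_approx_mono) simp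
    thus False using that assms(2) finite_subset by blast
  qed
  show ?thesis unfolding lagrange_const_def
  proof (rule antisym)
    show "Sup {ereal (of_int k) |k. infinite (good_approx \<alpha> k)} \<le> ereal (of_int n)"
      by (rule Sup_least) (auto dest: le)
    show "ereal (of_int n) \<le> Sup {ereal (of_int k) |k. infinite (good_approx \<alpha> k)}"
      by (rule Sup_upper) (use assms(1) in auto)
  qed
qed

lemma lc_inf:
  assumes "\<And>k. infinite (good_approx \<alpha> k)"
  shows "lagrange_const \<alpha> = \<infinity>"
proof -
  have "\<forall>x<top. \<exists>i\<in>{ereal (of_int k) |k. infinite (good_approx \<alpha> k)}. x < i"
  proof (intro allI impI)
    fix x :: ereal assume "x < top"
    then obtain k :: int where "x < ereal (of_int k)"
    proof (cases x)
      case (real r)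
      have "r < of_int (\<lfloor>r\<rfloor> + 1)" by linarith
      then show ?thesis using real by (intro that[of "\<lfloor>r\<rfloor> + 1"]) simp
    next
      case MInf
      show ?thesis by (rule that[of 0]) (simp add: MInf)
    qed (use \<open>x < top\<close> in simp)
    thus "\<exists>i\<in>{ereal (of_int k) |k. infinite (good_approx \<alpha> k)}. x < i"
      using assms by blast
  qed
  hence "Sup {ereal (of_int k) |k. infinite (good_approx \<alpha> k)} = top" by (subst Sup_eq_top_iff)
  thus ?thesis unfolding lagrange_const_def top_ereal_def .
qed

lemma lc_range:
  assumes one: "infinite (good_approx \<alpha> 1)"
  shows "lagrange_const \<alpha> \<in> {ereal (of_int n) | n::int. n \<ge> 1} \<union> {\<infinity>}"
proof (cases "\<forall>k. infinite (good_approx \<alpha> k)")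
  case True
  then show ?thesis using lc_inf by auto
next
  case False
  then obtain k0 where k0: "finite (good_approx \<alpha> k0)" by blast
  have "\<exists>n\<ge>1. infinite (good_approx \<alpha> n) \<and> finite (good_approx \<alpha> (n+1))"
  proof (rule ccontr)
    assume H: "\<not> ?thesis"
    have "infinite (good_approx \<alpha> k)" if "k \<ge> 1" for k
      using that
    proof (induction k rule: int_ge_induct)
      case base then show ?case using one .
    next
      case (step i) then show ?case using H by auto
    qed
    moreover have "infinite (good_approx \<alpha> k0)"
    proof (cases "k0 \<ge> 1")
      case True then show ?thesis using calculation by blast
    next
      case False
      hence "good_approx \<alpha> 1 \<subseteq> good_approx \<alpha> k0" by (intro good_approx_mono) simp
      then show ?thesis using one finite_subset by blast
    qed
    ultimately show False using k0 by blast
  qed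
  then obtain n where "n \<ge> 1" "infinite (good_approx \<alpha> n)" "finite (good_approx \<alpha> (n+1))" by blast
  then show ?thesis using lc_fin by auto
qed




lemma kernel_gen:
  fixes a :: "'a \<Rightarrow> nat \<Rightarrow> rat"
  shows "finite J \<Longrightarrow> card J < n \<Longrightarrow> \<exists>v. (\<exists>i<n. v i \<noteq> 0) \<and> (\<forall>j\<in>J. (\<Sum>i<n. a j i * v i) = 0)"
proof (induction n arbitrary: J a)
  case 0 then show ?case by simp
next
  case (Suc n)
  show ?case
  proof (cases "\<forall>j\<in>J. a j n = 0")
    case True
    define v where "v = (\<lambda>i. if i = n then (1::rat) else 0)"
    have "(\<Sum>i<Suc n. a j i * v i) = a j n" for j
      by (simp add: v_def)
    then show ?thesis using True by (intro exI[of _ v]) (auto simp: v_def)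
  next
    case False
    then obtain j0 where j0: "j0 \<in> J" "a j0 n \<noteq> 0" by blast
    define J' where "J' = J - {j0}"
    have fJ': "finite J'" using Suc.prems by (simp add: J'_def)
    have "card J > 0" using Suc.prems(1) j0(1) card_gt_0_iff by blast
    hence cJ': "card J' < n" using Suc.prems j0 by (simp add: J'_def)
    define b where "b = (\<lambda>j i. a j i - (a j n / a j0 n) * a j0 i)"
    obtain w where w: "\<exists>i<n. w i \<noteq> 0" "\<And>j. j \<in> J' \<Longrightarrow> (\<Sum>i<n. b j i * w i) = 0"
      using Suc.IH[OF fJ' cJ', of b] by blast
    define c where "c = - (\<Sum>i<n. a j0 i * w i) / a j0 n"
    define v where "v = (\<lambda>i. if i = n then c else w i)"
    have sv: "(\<Sum>i<Suc n. a j i * v i) = (\<Sum>i<n. a j i * w i) + a j n * c" for j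
      by (simp add: v_def)
    have "(\<Sum>i<Suc n. a j i * v i) = 0" if j: "j \<in> J" for j
    proof (cases "j = j0")
      case True
      then show ?thesis using j0 unfolding sv by (simp add: c_def)
    next
      case False
      hence "j \<in> J'" using j by (simp add: J'_def)
      hence "(\<Sum>i<n. b j i * w i) = 0" by (rule w(2))
      moreover have "(\<Sum>i<n. b j i * w i) = (\<Sum>i<n. a j i * w i) - (a j n / a j0 n) * (\<Sum>i<n. a j0 i * w i)"
        by (simp add: b_def algebra_simps sum_subtractf sum_distrib_left)
      ultimately show ?thesis using j0 unfolding sv by (simp add: c_def field_simps)
    qed
    moreover have "\<exists>i<Suc n. v i \<noteq> 0" using w(1) by (auto simp: v_def)
    ultimately show ?thesis by blast
  qed
qed

lemma kernel_exists:
  fixes a :: "nat \<Rightarrow> nat \<Rightarrow> rat"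
  shows "\<exists>v::nat\<Rightarrow>rat. (\<exists>i\<le>N. v i \<noteq> 0) \<and> (\<forall>j<N. (\<Sum>i\<le>N. a j i * v i) = 0)"
proof -
  obtain v where v: "\<exists>i<Suc N. v i \<noteq> 0" "\<forall>j\<in>{..<N}. (\<Sum>i<Suc N. a j i * v i) = 0"
    using kernel_gen[of "{..<N}" "Suc N" a] by auto
  thus ?thesis by (auto simp: lessThan_Suc_atMost less_Suc_eq_le)
qed


lemma polyT_sum: "polyT (sum f A) = (\<Sum>x\<in>A. polyT (f x))"
  by (induction A rule: infinite_finite_induct) (simp_all add: polyT_add)

lemma dirichlet:
  assumes irr: "\<alpha> \<notin> ratfunT"
  shows "infinite (good_approx \<alpha> 1)"
proof (rule infinite_approx[where \<alpha> = \<alpha>])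
  fix M :: int
  define N where "N = nat M"
  obtain v where v: "\<exists>i\<le>N. v i \<noteq> 0" "\<And>j. j < N \<Longrightarrow> (\<Sum>i\<le>N. fls_nth \<alpha> (int j + 1 + int i) * v i) = 0"
    using kernel_exists[of N "\<lambda>j i. fls_nth \<alpha> (int j + 1 + int i)"] by blast
  define q where "q = (\<Sum>i\<le>N. monom (v i) i)"
  have cq: "coeff q k = (if k \<le> N then v k else 0)" for k
    by (simp add: q_def coeff_sum coeff_monom)
  have qnz: "q \<noteq> 0" using v(1) cq by (metis coeff_0)
  have degq: "degree q \<le> N" using cq by (intro degree_le) auto
  define h where "h = polyT q * \<alpha>"
  have hnth: "fls_nth h m = (\<Sum>i\<le>N. v i * fls_nth \<alpha> (m + int i))" for m
  proof -
    have "polyT q = (\<Sum>i\<le>N. fls_const (v i) * fls_X_inv ^ i)"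
      by (simp add: q_def polyT_sum polyT_monom)
    hence "h = (\<Sum>i\<le>N. fls_const (v i) * (fls_X_inv ^ i * \<alpha>))"
      by (simp add: h_def sum_distrib_right mult.assoc)
    thus ?thesis by (simp add: fls_nth_sum fls_X_inv_power_times_conv_shift)
  qed
  have hz: "fls_nth h (int j + 1) = 0" if "j < N" for j
    using v(2)[OF that] by (simp add: hnth mult.commute add_ac)
  define P where "P = fls_prpart_as_fls h + fls_const (fls_nth h 0)"
  have Pnth: "fls_nth P j = (if j \<le> 0 then fls_nth h j else 0)" for j
    by (simp add: P_def fls_prpart_as_fls_nth del: fls_shift_nth)
  obtain p where p: "polyT p = P" using polyT_surj[of P] Pnth by auto
  define R where "R = h - P"
  have Rz: "fls_nth R j = 0" if "j < int N + 1" for j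
  proof (cases "j \<le> 0")
    case True then show ?thesis by (simp add: R_def Pnth)
  next
    case False
    define j' where "j' = nat (j - 1)"
    have "j = int j' + 1" "j' < N" using that False by (auto simp: j'_def)
    then show ?thesis using hz by (simp add: R_def Pnth)
  qed
  define r where "r = polyT p / polyT q"
  have ar: "\<alpha> - r = R / polyT q"
    using qnz by (simp add: r_def R_def h_def p field_simps)
  have Rnz: "R \<noteq> 0"
  proof
    assume "R = 0"
    hence "\<alpha> = r" using ar by simp
    hence "\<alpha> \<in> ratfunT" unfolding ratfunT_def r_def using qnz by blast
    thus False using irr by simp
  qed
  have "int N + 1 \<le> fls_subdegree R" using Rnz Rz by (intro fls_subdegree_geI) auto
  moreover have sd: "fls_subdegree (\<alpha> - r) = fls_subdegree R + int (degree q)"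
    unfolding ar using Rnz qnz by (simp add: subdeg_div polyT_subdegree)
  ultimately have sd2: "int N + 1 + int (degree q) \<le> fls_subdegree (\<alpha> - r)" by simp
  have "r \<in> good_approx \<alpha> 1"
  proof -
    have "- fls_subdegree (\<alpha> - r) \<le> - 2 * int (degree q) - 1" using degq sd2 by linarith
    thus ?thesis unfolding good_approx_def degT_le_def mem_Collect_eq using qnz
      by (intro exI[of _ p] exI[of _ q]) (simp add: r_def)
  qed
  moreover have "\<alpha> \<noteq> r" using ar Rnz qnz by auto
  moreover have "M \<le> fls_subdegree (\<alpha> - r)" using sd2 unfolding N_def by linarith
  ultimately show "\<exists>r\<in>good_approx \<alpha> 1. \<alpha> \<noteq> r \<and> M \<le> fls_subdegree (\<alpha> - r)" by blast
qed




definition sQ :: "nat \<Rightarrow> rat fls" where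
  "sQ m = fps_to_fls (fps_radical (\<lambda>_ _. 1) 2 (1 + 4 * fps_X ^ (2*m)))"
definition tQ :: "nat \<Rightarrow> rat fls" where
  "tQ m = fls_X_inv ^ m"
definition aQ :: "nat \<Rightarrow> rat fls" where
  "aQ m = tQ m * (1 + sQ m) / 2"
definition bQ :: "nat \<Rightarrow> rat fls" where
  "bQ m = tQ m - aQ m"

lemma sQ_sq:
  assumes "m \<ge> 1" shows "sQ m ^ 2 = 1 + 4 * fls_X ^ (2*m)"
proof -
  let ?a = "1 + 4 * fps_X ^ (2*m) :: rat fps"
  have a0: "?a $ 0 = 1" using assms by simp
  have "(fps_radical (\<lambda>_ _. 1) (Suc 1) ?a) ^ (Suc 1) = ?a"
    using power_radical[of ?a "\<lambda>_ _. 1" 1] a0 by simp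
  hence "fps_radical (\<lambda>_ _. 1) 2 ?a ^ 2 = ?a" by (simp add: numeral_2_eq_2)
  hence "fps_to_fls (fps_radical (\<lambda>_ _. 1) 2 ?a ^ 2) = fps_to_fls ?a" by simp
  thus ?thesis
    by (simp add: sQ_def fps_to_fls_power fls_times_fps_to_fls)
qed

lemma sQ_nth0: "fls_nth (sQ m) 0 = 1"
  by (simp add: sQ_def)

lemma sQ_nz: "sQ m \<noteq> 0"
  using sQ_nth0[of m] by auto

lemma sQ_subdeg: "fls_subdegree (sQ m) = 0"
  by (rule fls_subdegree_eqI) (auto simp: sQ_nth0 sQ_def)

lemma tX: "tQ m * fls_X ^ m = 1"
  by (simp add: tQ_def fls_X_inv_power_times_conv_shift fls_X_power_conv_shift_1)

lemma tQ_polyT: "polyT (monom 1 m) = tQ m"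
  by (simp add: polyT_monom tQ_def)

lemma tQ_nz: "tQ m \<noteq> 0" by (simp add: tQ_def)

lemma tQ_subdeg: "fls_subdegree (tQ m) = - int m" by (simp add: tQ_def)

lemma ab_prod:
  assumes "m \<ge> 1" shows "aQ m * bQ m = -1"
proof -
  let ?t = "tQ m" and ?S = "sQ m"
  have "aQ m * bQ m = - (?t^2 * (?S^2 - 1) / 4)"
    by (simp add: bQ_def aQ_def field_simps power2_eq_square)
  also have "\<dots> = - ((?t * fls_X ^ m)^2)"
    using assms by (simp add: sQ_sq power_mult_distrib power_mult[symmetric] mult.commute)
  also have "\<dots> = -1" by (simp add: tX)
  finally show ?thesis .
qed

lemma ba_diff: "bQ m - aQ m = - (tQ m * sQ m)"
  by (simp add: bQ_def aQ_def field_simps)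

lemma ba_diff_subdeg: "fls_subdegree (bQ m - aQ m) = - int m"
  by (simp add: ba_diff tQ_nz sQ_nz tQ_subdeg sQ_subdeg)

lemma ba_diff_nz: "bQ m - aQ m \<noteq> 0"
  by (simp add: ba_diff tQ_nz sQ_nz)

lemma aQ_subdeg: "fls_subdegree (aQ m) = - int m"
proof -
  have s1: "fls_subdegree (1 + sQ m) = 0"
    by (rule fls_subdegree_eqI) (auto simp: sQ_nth0 sQ_def)
  have "fls_nth (1 + sQ m) 0 = 2" by (simp add: sQ_nth0)
  hence nz: "1 + sQ m \<noteq> 0" using fls_nonzeroI[of "1 + sQ m" 0] by simp
  show ?thesis unfolding aQ_def
    using nz tQ_nz by (simp add: subdeg_div s1 tQ_subdeg)
qed

lemma aQ_nz: "m \<ge> 1 \<Longrightarrow> aQ m \<noteq> 0" using ab_prod[of m] by auto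
lemma bQ_nz: "m \<ge> 1 \<Longrightarrow> bQ m \<noteq> 0" using ab_prod[of m] by auto

lemma bQ_subdeg: assumes "m \<ge> 1" shows "fls_subdegree (bQ m) = int m"
proof -
  have "fls_subdegree (aQ m * bQ m) = 0" using ab_prod[OF assms] by simp
  thus ?thesis using aQ_nz[OF assms] bQ_nz[OF assms] aQ_subdeg[of m] by simp
qed

lemma norm_id:
  assumes "m \<ge> 1" "Q \<noteq> 0"
  shows "Q^2 * (aQ m - P/Q) * (bQ m - P/Q) = P^2 - tQ m * P * Q - Q^2"
proof -
  have s: "aQ m + bQ m = tQ m" by (simp add: bQ_def)
  have "(aQ m - P/Q) * (bQ m - P/Q) = aQ m * bQ m - (P/Q) * (aQ m + bQ m) + (P/Q)^2"
    by (simp add: algebra_simps power2_eq_square)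
  also have "\<dots> = -1 - (P/Q) * tQ m + (P/Q)^2" using ab_prod[OF assms(1)] s by simp
  finally have "Q^2 * ((aQ m - P/Q) * (bQ m - P/Q)) = Q^2 * (-1 - (P/Q) * tQ m + (P/Q)^2)" by simp
  also have "\<dots> = -(Q^2) - (Q * (P/Q)) * Q * tQ m + (Q * (P/Q))^2"
    by (simp add: algebra_simps power2_eq_square)
  also have "Q * (P/Q) = P" using assms(2) by simp
  also have "-(Q^2) - P * Q * tQ m + P^2 = P^2 - tQ m * P * Q - Q^2"
    by (simp add: algebra_simps)
  finally show ?thesis by (simp add: mult.assoc)
qed

definition Nm :: "nat \<Rightarrow> rat poly \<Rightarrow> rat poly \<Rightarrow> rat poly" where
  "Nm m p q = p^2 - monom 1 m * p * q - q^2"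

lemma polyT_Nm: "polyT (Nm m p q) = polyT p ^ 2 - tQ m * polyT p * polyT q - polyT q ^ 2"
  by (simp add: Nm_def polyT_diff polyT_mult polyT_power tQ_polyT)

primrec pqs :: "nat \<Rightarrow> nat \<Rightarrow> rat poly \<times> rat poly" where
  "pqs m 0 = (1, 0)"
| "pqs m (Suc k) = (monom 1 m * fst (pqs m k) + snd (pqs m k), fst (pqs m k))"

lemma Nm_pqs: "Nm m (fst (pqs m k)) (snd (pqs m k)) = (-1) ^ k"
proof (induction k)
  case 0 then show ?case by (simp add: Nm_def)
next
  case (Suc k)
  have ring: "(x*p+q)^2 - x*(x*p+q)*p - p^2 = -(p^2 - x*p*q - q^2)" for x p q :: "rat poly"
    by algebra
  show ?case using Suc ring[of "monom 1 m" "fst (pqs m k)" "snd (pqs m k)"]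
    by (simp add: Nm_def)
qed

lemma deg_pqs:
  assumes "m \<ge> 1"
  shows "fst (pqs m k) \<noteq> 0 \<and> degree (fst (pqs m k)) = k*m \<and>
         (k \<ge> 1 \<longrightarrow> snd (pqs m k) \<noteq> 0 \<and> degree (snd (pqs m k)) = (k-1)*m) \<and>
         (k = 0 \<longrightarrow> snd (pqs m k) = 0)"
proof (induction k)
  case 0 then show ?case by simp
next
  case (Suc k)
  let ?p = "fst (pqs m k)" and ?q = "snd (pqs m k)"
  have d1: "degree (monom 1 m * ?p) = m + k*m"
    using Suc.IH by (simp add: degree_mult_eq degree_monom_eq)
  have d2: "degree (monom 1 m * ?p + ?q) = m + k*m"
  proof (cases "k = 0")
    case True then show ?thesis using Suc.IH d1 by simp
  next
    case False
    hence "degree ?q < degree (monom 1 m * ?p)" using Suc.IH d1 assms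
      by (simp add: diff_mult_distrib) 
    then show ?thesis using d1 by (simp add: degree_add_eq_left)
  qed
  have "monom 1 m * ?p + ?q \<noteq> 0"
    using d2 assms by (metis add_is_0 degree_0 not_one_le_zero)
  then show ?case using d2 Suc.IH by simp
qed



lemma conv_pqs:
  assumes m: "m \<ge> 1" and k: "k \<ge> 1"
  defines "p \<equiv> fst (pqs m k)" and "q \<equiv> snd (pqs m k)"
  shows "q \<noteq> 0" "aQ m \<noteq> polyT p / polyT q"
    "fls_subdegree (aQ m - polyT p / polyT q) = 2 * int (degree q) + int m"
proof -
  from deg_pqs[OF m, of k] k have d: "p \<noteq> 0" "q \<noteq> 0" "degree p = k*m" "degree q = (k-1)*m"
    by (auto simp: p_def q_def)
  show "q \<noteq> 0" by (rule d(2))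
  define r where "r = polyT p / polyT q"
  have dpq: "degree p = degree q + m" using d k by (cases k) auto
  have sr: "fls_subdegree r = - int m"
    using d(1,2) by (simp add: r_def subdeg_div polyT_subdegree dpq)
  have rnz: "r \<noteq> 0" using d by (simp add: r_def)
  have sbr: "fls_subdegree (bQ m - r) = - int m"
    using rnz sr bQ_subdeg[OF m] m by (subst fls_subdegree_diff_eq2) auto
  have bnz: "bQ m - r \<noteq> 0"
  proof
    assume "bQ m - r = 0"
    hence "r = bQ m" by simp
    thus False using sr bQ_subdeg[OF m] m by simp
  qed
  have N: "(polyT q)^2 * (aQ m - r) * (bQ m - r) = (-1)^k"
    using norm_id[OF m, of "polyT q" "polyT p"] d Nm_pqs[of m k] polyT_Nm[of m p q]
    by (simp add: r_def p_def q_def polyT_power polyT_uminus)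
  have anz: "aQ m - r \<noteq> 0"
  proof
    assume "aQ m - r = 0"
    hence "(polyT q)^2 * (aQ m - r) * (bQ m - r) = 0" by simp
    thus False using N by simp
  qed
  thus "aQ m \<noteq> polyT p / polyT q" by (simp add: r_def)
  have "fls_subdegree ((polyT q)^2 * (aQ m - r) * (bQ m - r)) = 0"
    unfolding N by (simp add: fls_subdegree_pow)
  hence "- 2 * int (degree q) + fls_subdegree (aQ m - r) + (- int m) = 0"
    using anz bnz d sbr by (simp add: polyT_subdegree fls_subdegree_pow)
  thus "fls_subdegree (aQ m - polyT p / polyT q) = 2 * int (degree q) + int m"
    by (simp add: r_def)
qed

lemma aQ_irr:
  assumes m: "m \<ge> 1" shows "aQ m \<notin> ratfunT"
proof
  assume "aQ m \<in> ratfunT"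
  then obtain p0 q0 where pq0: "q0 \<noteq> 0" "aQ m = polyT p0 / polyT q0"
    unfolding ratfunT_def by blast
  define k where "k = degree q0 + 2"
  have k: "k \<ge> 1" by (simp add: k_def)
  define p where "p = fst (pqs m k)"
  define q where "q = snd (pqs m k)"
  note c = conv_pqs[OF m k, folded p_def q_def]
  have dq: "degree q = (k-1)*m" using deg_pqs[OF m, of k] k by (simp add: q_def)
  have "fls_subdegree (aQ m - polyT p / polyT q) \<le> int (degree q0) + int (degree q)"
    by (rule liouville[OF pq0(1) c(1) pq0(2) c(2)])
  hence "int (degree q) + int m \<le> int (degree q0)" using c(3) by simp
  moreover have "degree q \<ge> k - 1" using dq m by simp
  ultimately show False unfolding k_def by simp
qed

lemma aQ_good: assumes m: "m \<ge> 1" shows "infinite (good_approx (aQ m) (int m))"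
proof (rule infinite_approx[where \<alpha> = "aQ m"])
  fix M :: int
  define k where "k = nat M + 1"
  have k: "k \<ge> 1" by (simp add: k_def)
  define p where "p = fst (pqs m k)"
  define q where "q = snd (pqs m k)"
  note c = conv_pqs[OF m k, folded p_def q_def]
  have dq: "degree q = (k-1)*m" using deg_pqs[OF m, of k] k by (simp add: q_def)
  have "polyT p / polyT q \<in> good_approx (aQ m) (int m)"
    unfolding good_approx_def degT_le_def mem_Collect_eq using c(1) c(3) by (intro exI[of _ p] exI[of _ q]) simp
  moreover have "M \<le> fls_subdegree (aQ m - polyT p / polyT q)"
  proof -
    have "degree q \<ge> nat M" using dq m by (simp add: k_def)
    thus ?thesis using c(3) by linarith
  qed
  ultimately show "\<exists>r\<in>good_approx (aQ m) (int m). aQ m \<noteq> r \<and> M \<le> fls_subdegree (aQ m - r)"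
    using c(2) by blast
qed

lemma aQ_bad: assumes m: "m \<ge> 1" shows "good_approx (aQ m) (int m + 1) = {}"
proof (rule ccontr)
  assume "good_approx (aQ m) (int m + 1) \<noteq> {}"
  then obtain p q where pq: "q \<noteq> 0" "degT_le (aQ m - polyT p / polyT q) (- 2 * int (degree q) - (int m + 1))"
    unfolding good_approx_def by blast
  define r where "r = polyT p / polyT q"
  have anz: "aQ m - r \<noteq> 0"
  proof
    assume "aQ m - r = 0"
    hence "aQ m \<in> ratfunT" unfolding ratfunT_def r_def using pq(1) by auto
    thus False using aQ_irr[OF m] by simp
  qed
  have sd: "fls_subdegree (aQ m - r) \<ge> 2 * int (degree q) + int m + 1"
    using pq(2) anz unfolding degT_le_def r_def by simp
  have br: "bQ m - r = (bQ m - aQ m) + (aQ m - r)" by simp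
  have sbr: "fls_subdegree (bQ m - r) = - int m"
    unfolding br using ba_diff_nz ba_diff_subdeg sd by (subst fls_subdegree_add_eq1) auto
  have bnz: "bQ m - r \<noteq> 0"
  proof
    assume "bQ m - r = 0"
    thus False using sbr m by simp
  qed
  have N: "(polyT q)^2 * (aQ m - r) * (bQ m - r) = polyT (Nm m p q)"
    using norm_id[OF m, of "polyT q" "polyT p"] pq(1) polyT_Nm[of m p q] by (simp add: r_def)
  have Nnz: "Nm m p q \<noteq> 0" using N anz bnz pq(1) by auto
  have "fls_subdegree ((polyT q)^2 * (aQ m - r) * (bQ m - r)) = - 2 * int (degree q) + fls_subdegree (aQ m - r) - int m"
    using anz bnz pq(1) sbr by (simp add: polyT_subdegree fls_subdegree_pow)
  moreover have "fls_subdegree ((polyT q)^2 * (aQ m - r) * (bQ m - r)) \<le> 0"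
    unfolding N using Nnz by (simp add: polyT_subdegree)
  ultimately show False using sd by simp
qed

lemma aQ_lc: assumes m: "m \<ge> 1" shows "lagrange_const (aQ m) = ereal (of_int (int m))"
  by (rule lc_fin) (use aQ_good[OF m] aQ_bad[OF m] in auto)



definition E3 :: "nat set" where "E3 = range (\<lambda>j::nat. 3^j)"
definition Ainf :: "rat fls" where "Ainf = fps_to_fls (Abs_fps (\<lambda>i. if i \<in> E3 then 1 else 0))"
definition TM :: "nat \<Rightarrow> rat fls" where
  "TM M = fps_to_fls (Abs_fps (\<lambda>i. if i \<in> E3 \<and> i \<le> 3^M then 1 else 0))"

lemma pow3_gap: "(3::nat)^M < 3^j \<Longrightarrow> 3^(Suc M) \<le> (3::nat)^j"
proof -
  assume "(3::nat)^M < 3^j"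
  hence "M < j" using power_less_imp_less_exp[of 3 M j] by simp
  thus ?thesis by (intro power_increasing) auto
qed

lemma pow3_ge: "M < (3::nat)^M"
proof -
  have "M < 2^M" by (rule less_exp)
  also have "(2::nat)^M \<le> 3^M" by (rule power_mono) auto
  finally show ?thesis .
qed

lemma D_nth: "fls_nth (Ainf - TM M) n = (if 0 \<le> n \<and> nat n \<in> E3 \<and> 3^M < nat n then 1 else 0)"
  by (auto simp: Ainf_def TM_def)

lemma D_nth': "fls_nth (Ainf - TM M) (int n) = (if n \<in> E3 \<and> 3^M < n then 1 else 0)"
  by (auto simp: Ainf_def TM_def)

lemma D_subdeg: "fls_subdegree (Ainf - TM M) = int (3^(Suc M))"
proof (rule fls_subdegree_eqI)
  show "fls_nth (Ainf - TM M) (int (3^(Suc M))) \<noteq> 0"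
  proof -
    have h1: "3^Suc M \<in> E3" unfolding E3_def by (rule rangeI)
    have h2: "(3::nat)^M < 3^Suc M" by simp
    show ?thesis by (simp only: D_nth' h1 h2 simp_thms if_True)
  qed
next
  fix k assume k: "k < int (3^(Suc M))"
  show "fls_nth (Ainf - TM M) k = 0"
  proof (cases "0 \<le> k \<and> nat k \<in> E3 \<and> 3^M < nat k")
    case True
    then obtain j where j: "nat k = 3^j" unfolding E3_def by auto
    have "3^M < (3::nat)^j" using True j by simp
    hence "3^Suc M \<le> (3::nat)^j" by (rule pow3_gap)
    hence le: "int (3^Suc M) \<le> int (3^j)" by (simp only: of_nat_le_iff)
    have kj: "k = int (3^j)" using j True by (metis nat_eq_iff)
    show ?thesis using k le kj by linarith
  qed (simp only: D_nth, simp)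
qed

lemma D_nz: "Ainf - TM M \<noteq> 0"
  using D_subdeg[of M] by (metis fls_zero_subdegree of_nat_eq_0_iff power_not_zero zero_neq_numeral)

lemma TM_rep: "\<exists>p. polyT p / polyT (monom 1 (3^M)) = TM M"
proof -
  have "\<exists>p. polyT p = fls_X_inv ^ (3^M) * TM M"
  proof (rule polyT_surj)
    fix j :: int assume "j > 0"
    thus "fls_nth (fls_X_inv ^ (3^M) * TM M) j = 0"
      by (simp add: fls_X_inv_power_times_conv_shift TM_def)
  qed
  then obtain p where p: "polyT p = fls_X_inv ^ (3^M) * TM M" by blast
  have X: "polyT (monom 1 (3^M)) = fls_X_inv ^ (3^M)" by (simp add: polyT_monom)
  have "polyT p / polyT (monom 1 (3^M)) = TM M" unfolding X p
    by (rule nonzero_mult_div_cancel_left) simp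
  thus ?thesis by blast
qed

lemma Ainf_irr: "Ainf \<notin> ratfunT"
proof
  assume "Ainf \<in> ratfunT"
  then obtain p0 q0 where pq0: "q0 \<noteq> 0" "Ainf = polyT p0 / polyT q0"
    unfolding ratfunT_def by blast
  define M where "M = degree q0"
  obtain p where p: "polyT p / polyT (monom 1 (3^M)) = TM M" using TM_rep by blast
  have "Ainf \<noteq> TM M" using D_nz[of M] by simp
  hence "fls_subdegree (Ainf - polyT p / polyT (monom (1::rat) (3^M))) \<le> int (degree q0) + int (degree (monom (1::rat) (3^M)))"
    using p by (intro liouville[OF pq0(1) _ pq0(2)]) auto
  hence "int (3^(Suc M)) \<le> int M + int (3^M)"
    using p D_subdeg[of M] by (simp add: M_def degree_monom_eq)
  hence "3^(Suc M) \<le> M + 3^M" by (simp only: of_nat_add[symmetric] of_nat_le_iff)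
  thus False using pow3_ge[of M] by simp
qed

lemma Ainf_good: "infinite (good_approx Ainf k)"
proof (rule infinite_approx[where \<alpha> = Ainf])
  fix B :: int
  define M where "M = nat (max k B)"
  obtain p where p: "polyT p / polyT (monom 1 (3^M)) = TM M" using TM_rep by blast
  have M3: "int M < 3^M" using pow3_ge[of M] by (metis of_nat_less_iff of_nat_numeral of_nat_power)
  have g1: "monom (1::rat) (3^M) \<noteq> 0" by simp
  have g2: "TM M = polyT p / polyT (monom 1 (3^M))" using p by simp
  have kM0: "k \<le> int M" "B \<le> int M" unfolding M_def by auto
  have kM: "k \<le> 3^M" "B \<le> 3^M" using kM0 M3 by linarith+
  have kM3: "(0::int) \<le> 3^M" by simp
  have g3: "- fls_subdegree (Ainf - TM M) \<le> - 2 * int (degree (monom (1::rat) (3 ^ M))) - k"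
    using kM by (simp add: D_subdeg degree_monom_eq)
  have "TM M \<in> good_approx Ainf k"
    unfolding good_approx_def degT_le_def mem_Collect_eq using g1 g2 g3 by blast
  moreover have "B \<le> fls_subdegree (Ainf - TM M)"
  proof -
    have "B \<le> 3 * 3^M" using kM kM3 by linarith
    thus ?thesis by (simp add: D_subdeg)
  qed
  ultimately show "\<exists>r\<in>good_approx Ainf k. Ainf \<noteq> r \<and> B \<le> fls_subdegree (Ainf - r)"
    using D_nz[of M] by force
qed

lemma Ainf_lc: "lagrange_const Ainf = \<infinity>"
  by (rule lc_inf) (rule Ainf_good)

theorem corollary1:
  shows "lagrange_spectrum = {ereal (of_int n) | n::int. n \<ge> 1} \<union> {\<infinity>}"
proof
  show "lagrange_spectrum \<subseteq> {ereal (of_int n) | n::int. n \<ge> 1} \<union> {\<infinity>}"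
  proof
    fix x assume "x \<in> lagrange_spectrum"
    then obtain \<alpha> where "x = lagrange_const \<alpha>" "\<alpha> \<notin> ratfunT"
      unfolding lagrange_spectrum_def by blast
    then show "x \<in> {ereal (of_int n) | n::int. n \<ge> 1} \<union> {\<infinity>}"
      using lc_range[OF dirichlet] by simp
  qed
next
  show "{ereal (of_int n) | n::int. n \<ge> 1} \<union> {\<infinity>} \<subseteq> lagrange_spectrum"
  proof
    fix x assume "x \<in> {ereal (of_int n) | n::int. n \<ge> 1} \<union> {\<infinity>}"
    then consider n :: int where "n \<ge> 1" "x = ereal (of_int n)" | "x = \<infinity>" by blast
    then show "x \<in> lagrange_spectrum"
    proof cases
      case 1
      hence m: "nat n \<ge> 1" by simp
      have "lagrange_const (aQ (nat n)) = x"
        using aQ_lc[OF m] 1 by simp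
      thus ?thesis unfolding lagrange_spectrum_def using aQ_irr[OF m] by blast
    next
      case 2
      thus ?thesis unfolding lagrange_spectrum_def using Ainf_lc Ainf_irr by force
    qed
  qed
qed

end
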